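(* Let $X$ be a real Hilbert space, $C\subseteq X$ a closed convex set, $T:C\to C$ a nonexpansive map, $x_0\in C$, and let $p\in C$ be a fixed point of $T$. Let $N\in\mathbb{N}\setminus\{0\}$ satisfy $N\geq 2\|x_0-p\|$. Then for every $k\in\mathbb{N}$ and every monotone function $f:\mathbb{N}\to\mathbb{N}$ there exist $n\in\mathbb{N}$ with $n\leq f^{(r)}(0)$, where $r:=N^2(k+1)$, and $x\in C\cap B_N$ such that $$\|T(x)-x\|\leq \frac{1}{f(n)+1}$$ and $$\forall y\in C\cap B_N\ \left(\|T(y)-y\|\leq \frac{1}{n+1}\ \to\ \|x-x_0\|^2\leq \|y-x_0\|^2+\frac{1}{k+1}\right).$$
   Context: $B_N:=\{x\in X:\ \|x-p\|\leq N\}$ denotes the closed ball of radius $N$ centered at the fixed point $p$. A function $f:\mathbb{N}\to\mathbb{N}$ is called monotone if $f(n)\leq f(n+1)$ for all $n\in\mathbb{N}$. $f^{(r)}$ denotes the $r$-fold composition of $f$ with itself ($f^{(0)}$ is the identity). A map $T$ is nonexpansive if $\|T(x)-T(y)\|\leq\|x-y\|$ for all $x,y$. *)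

theory Defs
  imports "HOL-Analysis.Analysis"
begin

end

theory Submission
  imports Defs
begin

lemma iter_mono_step:
  fixes f :: "nat \<Rightarrow> nat"
  assumes "mono f"
  shows "(f ^^ i) 0 \<le> (f ^^ Suc i) 0"
proof (induction i)
  case 0 then show ?case by simp
next
  case (Suc i)
  then show ?case using assms by (simp add: mono_def)
qed

lemma iter_mono_le:
  fixes f :: "nat \<Rightarrow> nat"
  assumes "mono f" "i \<le> r"
  shows "(f ^^ i) 0 \<le> (f ^^ r) 0"
proof -
  have "incseq (\<lambda>i. (f ^^ i) 0)"
    using iter_mono_step[OF assms(1)] by (simp add: incseq_SucI)
  then show ?thesis using assms(2) by (simp add: incseq_def)
qed

theorem mainTheorem1:
  fixes C :: "'a::{real_inner, complete_space} set"
    and T :: "'a \<Rightarrow> 'a"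
    and x0 p :: 'a
    and N :: nat
  assumes "closed C" and "convex C"
    and "T ` C \<subseteq> C"
    and "\<forall>x\<in>C. \<forall>y\<in>C. norm (T x - T y) \<le> norm (x - y)"
    and "x0 \<in> C" and "p \<in> C" and "T p = p"
    and "N > 0" and "real N \<ge> 2 * norm (x0 - p)"
  shows "\<forall>(k::nat) (f::nat \<Rightarrow> nat). mono f \<longrightarrow>
    (\<exists>n x. n \<le> (f ^^ (N\<^sup>2 * (k + 1))) 0 \<and> x \<in> C \<and> x \<in> cball p (real N) \<and>
      norm (T x - x) \<le> 1 / (real (f n) + 1) \<and>
      (\<forall>y \<in> C \<inter> cball p (real N). norm (T y - y) \<le> 1 / (real n + 1) \<longrightarrow>
          (norm (x - x0))\<^sup>2 \<le> (norm (y - x0))\<^sup>2 + 1 / (real k + 1)))"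
proof (intro allI impI)
  fix k :: nat and f :: "nat \<Rightarrow> nat"
  assume mf: "mono f"
  define r where "r = N\<^sup>2 * (k + 1)"
  define a where "a = (\<lambda>i. (f ^^ i) 0)"
  define S where "S = (\<lambda>m::nat. {x. x \<in> C \<and> x \<in> cball p (real N) \<and> norm (T x - x) \<le> 1 / (real m + 1)})"
  define d where "d = (\<lambda>x. (norm (x - x0))\<^sup>2)"
  have pS: "p \<in> S m" for m using assms(6,7) by (simp add: S_def)
  show "\<exists>n x. n \<le> (f ^^ (N\<^sup>2 * (k + 1))) 0 \<and> x \<in> C \<and> x \<in> cball p (real N) \<and>
      norm (T x - x) \<le> 1 / (real (f n) + 1) \<and>
      (\<forall>y \<in> C \<inter> cball p (real N). norm (T y - y) \<le> 1 / (real n + 1) \<longrightarrow>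
          (norm (x - x0))\<^sup>2 \<le> (norm (y - x0))\<^sup>2 + 1 / (real k + 1))"
  proof (rule ccontr)
    assume H: "\<not> ?thesis"
    have fail: "\<exists>y \<in> S (a i). d x > d y + 1 / (real k + 1)"
      if "i < r" "x \<in> S (a (Suc i))" for i x
    proof -
      have "a i \<le> (f ^^ r) 0" unfolding a_def using iter_mono_le[OF mf] that(1) by simp
      moreover have "a (Suc i) = f (a i)" by (simp add: a_def)
      ultimately have le: "a i \<le> (f ^^ (N\<^sup>2 * (k + 1))) 0" and eq: "a (Suc i) = f (a i)"
        by (simp_all add: r_def)
      have xs: "x \<in> C" "x \<in> cball p (real N)" "norm (T x - x) \<le> 1 / (real (f (a i)) + 1)"
        using that(2) eq by (auto simp: S_def)
      have "\<not> (\<forall>y \<in> C \<inter> cball p (real N). norm (T y - y) \<le> 1 / (real (a i) + 1) \<longrightarrow>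
          (norm (x - x0))\<^sup>2 \<le> (norm (y - x0))\<^sup>2 + 1 / (real k + 1))"
        using H le xs by blast
      then show ?thesis unfolding S_def d_def by (auto simp: not_le)
    qed
    have P: "j \<le> r \<longrightarrow> (\<exists>x \<in> S (a (r - j)). d x + real j / (real k + 1) \<le> d p)" for j
    proof (induction j)
      case 0 then show ?case using pS by auto
    next
      case (Suc j)
      show ?case
      proof
        assume sj: "Suc j \<le> r"
        define i where "i = r - Suc j"
        have ri: "r - j = Suc i" using sj by (simp add: i_def)
        obtain x where x: "x \<in> S (a (Suc i))" "d x + real j / (real k + 1) \<le> d p"
          using Suc sj ri by auto
        obtain y where y: "y \<in> S (a i)" "d x > d y + 1 / (real k + 1)"
          using fail[OF _ x(1)] sj i_def by auto
        have "d y + real (Suc j) / (real k + 1) = d y + 1 / (real k + 1) + real j / (real k + 1)"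
          by (simp add: add_divide_distrib)
        also have "\<dots> \<le> d p" using x(2) y(2) by linarith
        finally show "\<exists>x \<in> S (a (r - Suc j)). d x + real (Suc j) / (real k + 1) \<le> d p"
          using y(1) by (auto simp: i_def)
      qed
    qed
    then obtain x where x: "d x + real r / (real k + 1) \<le> d p" by auto
    have "real r / (real k + 1) = (real N)\<^sup>2" by (simp add: r_def field_simps)
    moreover have "d x \<ge> 0" by (simp add: d_def)
    moreover have "d p \<le> (real N / 2)\<^sup>2"
    proof -
      have "norm (p - x0) \<le> real N / 2" using assms(9) by (simp add: norm_minus_commute)
      then show ?thesis unfolding d_def by (intro power_mono) auto
    qed
    moreover have "(real N)\<^sup>2 > 0" using assms(8) by simp
    ultimately show False using x by (simp add: power_divide)
  qed
qed

end
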